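(* Under the hypotheses in the context (decomposition of $\mathcal X$ over $A$, $g\in\mathcal G_s$, integer $T>0$, and $\operatorname{argmin}_{u\in\mathcal U} J^*_{t+1}(Ax+Bu)\cap[\bigoplus_{i\in\mathcal I}\mathcal E_i]\neq\emptyset$ for all $x\in\mathcal X$ and $t\in\{0,\dots,T-1\}$), the optimal cost $J^*=J^*_0$ of the finite-horizon problem $(A,B,g,T)$ belongs to $\mathcal G_s$, i.e. $J^*(x)=\sum_{i\in\mathcal I}J^*(\rho_i(x))$ for all $x\in\mathcal X$.
   Context: Let $\mathcal F$ be a field and $\mathcal X,\mathcal U$ finite-dimensional vector spaces over $\mathcal F$. Let $A:\mathcal X\to\mathcal X$ and $B:\mathcal U\to\mathcal X$ be linear maps with $B$ injective, and let $g:\mathcal X\to\mathbb R_{\ge0}$ satisfy $g(x)=0\iff x=0$. Standing assumption: all minima appearing below are attained. For the finite-horizon problem $(A,B,g,T)$ associated with $x_{t+1}=Ax_t+Bu_t$ (cost $\sum_{t=0}^Tg(x_t)$ minimized over input sequences $u_0,\dots,u_{T-1}$), the cost-to-go functions are $J^*_T=g$ and $J^*_t(x)=g(x)+\min_{u\in\mathcal U}J^*_{t+1}(Ax+Bu)$, and the optimal cost is $J^*=J^*_0$. A decomposition of $\mathcal X$ over $A$ is a direct sum $\mathcal X=\mathcal X_1\oplus\cdots\oplus\mathcal X_r$ with $r>1$ and $A\mathcal X_i\subseteq\mathcal X_i$ for all $i\in\mathcal I=\{1,\dots,r\}$; $\rho_i:\mathcal X\to\mathcal X_i$ is the projection along the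 other summands. $\mathcal G_s$ is the set of $h:\mathcal X\to\mathbb R_{\ge0}$ with $h(x)=\sum_i h(\rho_i(x))$ for all $x$. $\mathcal E_i=\{u\in\mathcal U:Bu\in\mathcal X_i\}$. *)

theory Defs
  imports Complex_Main
begin

definition is_decomposition ::
  "('f::field \<Rightarrow> 'x::ab_group_add \<Rightarrow> 'x) \<Rightarrow> ('x \<Rightarrow> 'x) \<Rightarrow> nat \<Rightarrow> (nat \<Rightarrow> 'x set) \<Rightarrow> bool" where
  "is_decomposition sX A r Xs \<longleftrightarrow>
     r > 1 \<and>
     (\<forall>i\<in>{1..r}. module.subspace sX (Xs i)) \<and>
     (\<forall>i\<in>{1..r}. A ` Xs i \<subseteq> Xs i) \<and>
     (\<forall>x. \<exists>!v. (\<forall>i\<in>{1..r}. v i \<in> Xs i) \<and> (\<forall>i. i \<notin> {1..r} \<longrightarrow> v i = 0)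
              \<and> x = (\<Sum>i=1..r. v i))"

definition proj :: "nat \<Rightarrow> (nat \<Rightarrow> 'x::ab_group_add set) \<Rightarrow> nat \<Rightarrow> 'x \<Rightarrow> 'x" where
  "proj r Xs i x = (THE v. (\<forall>j\<in>{1..r}. v j \<in> Xs j) \<and> (\<forall>j. j \<notin> {1..r} \<longrightarrow> v j = 0)
                         \<and> x = (\<Sum>j=1..r. v j)) i"

definition Gs :: "nat \<Rightarrow> (nat \<Rightarrow> 'x::ab_group_add set) \<Rightarrow> ('x \<Rightarrow> real) set" where
  "Gs r Xs = {h. (\<forall>x. h x \<ge> 0) \<and> (\<forall>x. h x = (\<Sum>i=1..r. h (proj r Xs i x)))}"

text \<open>Value function with k steps to go: V_0 = g, V_{k+1}(x) = g x + min_u V_k(Ax+Bu)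
  (min written as Inf; it is attained under the standing assumption).\<close>
fun Vtogo :: "('x::ab_group_add \<Rightarrow> 'x) \<Rightarrow> ('u \<Rightarrow> 'x) \<Rightarrow> ('x \<Rightarrow> real) \<Rightarrow> nat \<Rightarrow> 'x \<Rightarrow> real" where
  "Vtogo A B g 0 x = g x"
| "Vtogo A B g (Suc k) x = g x + (INF u. Vtogo A B g k (A x + B u))"

definition Jstar :: "('x::ab_group_add \<Rightarrow> 'x) \<Rightarrow> ('u \<Rightarrow> 'x) \<Rightarrow> ('x \<Rightarrow> real) \<Rightarrow> nat \<Rightarrow> nat \<Rightarrow> 'x \<Rightarrow> real" where
  "Jstar A B g T t = Vtogo A B g (T - t)"

definition argmin_set :: "('u \<Rightarrow> real) \<Rightarrow> 'u set" where
  "argmin_set f = {u. \<forall>u'. f u \<le> f u'}"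

definition Eset :: "('u \<Rightarrow> 'x) \<Rightarrow> (nat \<Rightarrow> 'x set) \<Rightarrow> nat \<Rightarrow> 'u set" where
  "Eset B Xs i = {u. B u \<in> Xs i}"

definition Esum :: "nat \<Rightarrow> ('u::ab_group_add \<Rightarrow> 'x) \<Rightarrow> (nat \<Rightarrow> 'x set) \<Rightarrow> 'u set" where
  "Esum r B Xs = {\<Sum>i=1..r. e i | e. \<forall>i\<in>{1..r}. e i \<in> Eset B Xs i}"

end

theory Submission
  imports Defs
begin

lemma additive_sum:
  fixes f :: "'a::comm_monoid_add \<Rightarrow> 'b::ab_group_add"
  assumes add: "\<forall>a b. f (a + b) = f a + f b" and fin: "finite S"
  shows "f (\<Sum>i\<in>S. v i) = (\<Sum>i\<in>S. f (v i))"
proof -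
  have "f 0 = f 0 + f 0" using add by (metis add_0)
  then have z: "f 0 = 0" by simp
  show ?thesis using fin by (induction S rule: finite_induct) (auto simp: z add)
qed

lemma min_INF:
  assumes "\<forall>u'. (f::'a \<Rightarrow> real) u \<le> f u'"
  shows "(INF u. f u) = f u"
  by (rule cInf_eq_minimum) (use assms in auto)

locale dec =
  fixes r :: nat and Xs :: "nat \<Rightarrow> 'x::ab_group_add set"
  assumes zero: "\<And>i. i \<in> {1..r} \<Longrightarrow> 0 \<in> Xs i"
    and uniq: "\<forall>x. \<exists>!v. (\<forall>i\<in>{1..r}. v i \<in> Xs i) \<and> (\<forall>i. i \<notin> {1..r} \<longrightarrow> v i = 0)
              \<and> x = (\<Sum>i=1..r. v i)"
begin

lemma proj_eq:
  assumes w: "\<forall>j\<in>{1..r}. w j \<in> Xs j" and y: "y = (\<Sum>j=1..r. w j)" and i: "i \<in> {1..r}"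
  shows "proj r Xs i y = w i"
proof -
  define w' where "w' = (\<lambda>j. if j \<in> {1..r} then w j else 0)"
  have P: "(\<forall>j\<in>{1..r}. w' j \<in> Xs j) \<and> (\<forall>j. j \<notin> {1..r} \<longrightarrow> w' j = 0) \<and> y = (\<Sum>j=1..r. w' j)"
    using w y unfolding w'_def by auto
  have "(THE v. (\<forall>j\<in>{1..r}. v j \<in> Xs j) \<and> (\<forall>j. j \<notin> {1..r} \<longrightarrow> v j = 0)
                         \<and> y = (\<Sum>j=1..r. v j)) = w'"
    apply (rule the1_equality) apply (rule uniq[rule_format]) apply (rule P) done
  then show ?thesis unfolding proj_def w'_def using i by simp
qed

lemma proj_props: "(\<forall>i\<in>{1..r}. proj r Xs i x \<in> Xs i) \<and> x = (\<Sum>i=1..r. proj r Xs i x)"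
  unfolding proj_def using theI'[OF uniq[rule_format, of x]] by blast

lemma proj_self:
  assumes i: "i \<in> {1..r}" and z: "z \<in> Xs i"
  shows "proj r Xs i z = z"
proof -
  define w where "w = (\<lambda>j. if j = i then z else 0)"
  have "\<forall>j\<in>{1..r}. w j \<in> Xs j" using zero z unfolding w_def by auto
  moreover have "z = (\<Sum>j=1..r. w j)" using i unfolding w_def by (simp add: sum.delta)
  ultimately have "proj r Xs i z = w i" using proj_eq i by blast
  then show ?thesis unfolding w_def by simp
qed

lemma step:
  fixes A :: "'x \<Rightarrow> 'x" and B :: "'u::ab_group_add \<Rightarrow> 'x" and V g :: "'x \<Rightarrow> real"
  assumes addA: "\<forall>a b. A (a + b) = A a + A b"
    and addB: "\<forall>a b. B (a + b) = B a + B b"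
    and AX: "\<forall>i\<in>{1..r}. \<forall>x\<in>Xs i. A x \<in> Xs i"
    and closed: "\<forall>i\<in>{1..r}. \<forall>a\<in>Xs i. \<forall>b\<in>Xs i. a + b \<in> Xs i"
    and V: "V \<in> Gs r Xs" and gG: "g \<in> Gs r Xs"
    and am: "\<forall>z. argmin_set (\<lambda>u. V (A z + B u)) \<inter> Esum r B Xs \<noteq> {}"
  shows "(\<lambda>x. g x + (INF u. V (A x + B u))) \<in> Gs r Xs"
proof -
  define W where "W z = (INF u. V (A z + B u))" for z
  have VV: "(\<forall>x. V x \<ge> 0) \<and> (\<forall>x. V x = (\<Sum>i=1..r. V (proj r Xs i x)))"
    using V unfolding Gs_def by (rule CollectD)
  have gg: "(\<forall>x. g x \<ge> 0) \<and> (\<forall>x. g x = (\<Sum>i=1..r. g (proj r Xs i x)))"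
    using gG unfolding Gs_def by (rule CollectD)
  have Vnn: "\<And>x. V x \<ge> 0" using VV by blast
  have Vadd: "\<And>x. V x = (\<Sum>i=1..r. V (proj r Xs i x))" using VV[THEN conjunct2] by (rule spec)
  have gnn: "\<And>x. g x \<ge> 0" using gg by blast
  have gadd: "\<And>x. g x = (\<Sum>i=1..r. g (proj r Xs i x))" using gg[THEN conjunct2] by (rule spec)
  have split: "proj r Xs i (A z + B (\<Sum>j=1..r. e j)) = A (proj r Xs i z) + B (e i)"
    if e: "\<forall>j\<in>{1..r}. e j \<in> Eset B Xs j" and i: "i \<in> {1..r}" for z e i
  proof (rule proj_eq[OF _ _ i])
    show "\<forall>j\<in>{1..r}. A (proj r Xs j z) + B (e j) \<in> Xs j"
      using proj_props AX closed e unfolding Eset_def by blast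
    have zs: "z = (\<Sum>j=1..r. proj r Xs j z)" using proj_props by blast
    have "A z = A (\<Sum>j=1..r. proj r Xs j z)" using zs by (rule arg_cong)
    also have "\<dots> = (\<Sum>j=1..r. A (proj r Xs j z))" by (rule additive_sum[OF addA]) simp
    finally have "A z = (\<Sum>j=1..r. A (proj r Xs j z))" .
    moreover have "B (\<Sum>j=1..r. e j) = (\<Sum>j=1..r. B (e j))"
      using additive_sum[OF addB, of "{1..r}"] by simp
    ultimately show "A z + B (\<Sum>j=1..r. e j) = (\<Sum>j=1..r. A (proj r Xs j z) + B (e j))"
      by (simp add: sum.distrib)
  qed
  have Vsplit: "V (A z + B (\<Sum>j=1..r. e j)) = (\<Sum>i=1..r. V (A (proj r Xs i z) + B (e i)))"
    if e: "\<forall>j\<in>{1..r}. e j \<in> Eset B Xs j" for z e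
    using Vadd[of "A z + B (\<Sum>j=1..r. e j)"] split[OF e] by simp
  have sel: "\<exists>e. (\<forall>j\<in>{1..r}. e j \<in> Eset B Xs j) \<and> W z = V (A z + B (\<Sum>j=1..r. e j))
              \<and> (\<forall>u. W z \<le> V (A z + B u))" for z
  proof -
    obtain u where u1: "u \<in> argmin_set (\<lambda>u. V (A z + B u))" and u2: "u \<in> Esum r B Xs"
      using am by blast
    obtain e where e: "\<forall>j\<in>{1..r}. e j \<in> Eset B Xs j" and ue: "u = (\<Sum>j=1..r. e j)"
      using u2 unfolding Esum_def by blast
    have m: "\<forall>u'. V (A z + B u) \<le> V (A z + B u')" using u1 unfolding argmin_set_def by blast
    have "W z = V (A z + B u)" unfolding W_def by (rule min_INF[OF m])
    then show ?thesis using e ue m by auto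
  qed
  have "\<forall>z. \<exists>e. (\<forall>j\<in>{1..r}. e j \<in> Eset B Xs j) \<and> W z = V (A z + B (\<Sum>j=1..r. e j))
              \<and> (\<forall>u. W z \<le> V (A z + B u))" using sel by blast
  from choice[OF this] obtain E where E0: "\<forall>z. (\<forall>j\<in>{1..r}. E z j \<in> Eset B Xs j) \<and> W z = V (A z + B (\<Sum>j=1..r. E z j))
              \<and> (\<forall>u. W z \<le> V (A z + B u))" by blast
  have E: "\<And>z. (\<forall>j\<in>{1..r}. E z j \<in> Eset B Xs j)" using E0 by blast
  have EW: "\<And>z. W z = V (A z + B (\<Sum>j=1..r. E z j))" using E0 by blast
  have Wle: "\<And>z u. W z \<le> V (A z + B u)" using E0 by blast
  have Wnn: "W z \<ge> 0" for z using EW Vnn by simp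
  have Wadd: "W x = (\<Sum>i=1..r. W (proj r Xs i x))" for x
  proof (rule antisym)
    define p where "p i = proj r Xs i x" for i
    have "(\<Sum>i=1..r. W (p i)) \<le> (\<Sum>i=1..r. V (A (p i) + B (E x i)))"
      by (rule sum_mono) (use Wle in auto)
    also have "\<dots> = W x" using EW[of x] Vsplit[OF E, of x] unfolding p_def by simp
    finally show "(\<Sum>i=1..r. W (proj r Xs i x)) \<le> W x" unfolding p_def .
    define f where "f i = E (p i) i" for i
    have f: "\<forall>j\<in>{1..r}. f j \<in> Eset B Xs j" using E unfolding f_def by blast
    have "W x \<le> V (A x + B (\<Sum>j=1..r. f j))" by (rule Wle)
    also have "\<dots> = (\<Sum>i=1..r. V (A (p i) + B (f i)))" using Vsplit[OF f] unfolding p_def by simp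
    also have "\<dots> \<le> (\<Sum>i=1..r. W (p i))"
    proof (rule sum_mono)
      fix i assume i: "i \<in> {1..r}"
      have pi: "p i \<in> Xs i" using proj_props i unfolding p_def by blast
      have "V (A (p i) + B (f i)) = V (A (proj r Xs i (p i)) + B (E (p i) i))"
        using proj_self[OF i pi] unfolding f_def by simp
      also have "\<dots> \<le> (\<Sum>j=1..r. V (A (proj r Xs j (p i)) + B (E (p i) j)))"
        by (rule member_le_sum[where f = "\<lambda>j. V (A (proj r Xs j (p i)) + B (E (p i) j))"])
           (use i Vnn in auto)
      also have "\<dots> = W (p i)" using EW[of "p i"] Vsplit[OF E, of "p i"] by simp
      finally show "V (A (p i) + B (f i)) \<le> W (p i)" .
    qed
    finally show "W x \<le> (\<Sum>i=1..r. W (proj r Xs i x))" unfolding p_def .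
  qed
  show ?thesis unfolding Gs_def
  proof (intro CollectI conjI allI)
    fix x
    show "0 \<le> g x + (INF u. V (A x + B u))" using gnn Wnn unfolding W_def by (simp add: add_nonneg_nonneg)
    show "g x + (INF u. V (A x + B u)) = (\<Sum>i=1..r. g (proj r Xs i x) + (INF u. V (A (proj r Xs i x) + B u)))"
      using gadd[of x] Wadd[of x] unfolding W_def by (simp add: sum.distrib)
  qed
qed

end

theorem corollary1:
  fixes sX :: "'f::field \<Rightarrow> 'x::ab_group_add \<Rightarrow> 'x"
    and sU :: "'f \<Rightarrow> 'u::ab_group_add \<Rightarrow> 'u"
    and A :: "'x \<Rightarrow> 'x" and B :: "'u \<Rightarrow> 'x" and g :: "'x \<Rightarrow> real"
    and r T :: nat and Xs :: "nat \<Rightarrow> 'x set"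
  assumes vsX: "\<exists>b. finite_dimensional_vector_space sX b"
    and vsU: "\<exists>b. finite_dimensional_vector_space sU b"
    and linA: "Vector_Spaces.linear sX sX A"
    and linB: "Vector_Spaces.linear sU sX B"
    and injB: "inj B"
    and g_nonneg: "\<forall>x. g x \<ge> 0"
    and g_zero: "\<forall>x. g x = 0 \<longleftrightarrow> x = 0"
    and attained: "\<forall>t<T. \<forall>x. \<exists>u. \<forall>u'. Jstar A B g T (Suc t) (A x + B u) \<le> Jstar A B g T (Suc t) (A x + B u')"
    and decomp: "is_decomposition sX A r Xs"
    and gGs: "g \<in> Gs r Xs"
    and Tpos: "T > 0"
    and argmin_hyp: "\<forall>x. \<forall>t<T. argmin_set (\<lambda>u. Jstar A B g T (Suc t) (A x + B u)) \<inter> Esum r B Xs \<noteq> {}"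
  shows "Jstar A B g T 0 \<in> Gs r Xs"
proof -
  have modX: "module sX" using linA unfolding Vector_Spaces.linear_iff module_iff_vector_space by blast
  note D = decomp[unfolded is_decomposition_def]
  have sub: "\<forall>i\<in>{1..r}. module.subspace sX (Xs i)" using D[THEN conjunct2, THEN conjunct1] .
  have subi: "0 \<in> Xs i \<and> (\<forall>a\<in>Xs i. \<forall>b\<in>Xs i. a + b \<in> Xs i)" if i: "i \<in> {1..r}" for i
  proof -
    have "module.subspace sX (Xs i)" using sub i by blast
    then show ?thesis unfolding module.subspace_def[OF modX] by blast
  qed
  have zero: "\<And>i. i \<in> {1..r} \<Longrightarrow> 0 \<in> Xs i" using subi by blast
  have closed: "\<forall>i\<in>{1..r}. \<forall>a\<in>Xs i. \<forall>b\<in>Xs i. a + b \<in> Xs i" using subi by blast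
  have AX: "\<forall>i\<in>{1..r}. \<forall>x\<in>Xs i. A x \<in> Xs i" using D[THEN conjunct2, THEN conjunct2, THEN conjunct1] by blast
  have uniq: "\<forall>x. \<exists>!v. (\<forall>i\<in>{1..r}. v i \<in> Xs i) \<and> (\<forall>i. i \<notin> {1..r} \<longrightarrow> v i = 0)
              \<and> x = (\<Sum>i=1..r. v i)" using D[THEN conjunct2, THEN conjunct2, THEN conjunct2] .
  interpret dec r Xs by (rule dec.intro[OF zero uniq])
  have addA: "\<forall>a b. A (a + b) = A a + A b" using linA unfolding Vector_Spaces.linear_iff by blast
  have addB: "\<forall>a b. B (a + b) = B a + B b" using linB unfolding Vector_Spaces.linear_iff by blast
  have IND: "k \<le> T \<Longrightarrow> Vtogo A B g k \<in> Gs r Xs" for k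
  proof (induction k)
    case 0
    have e0: "Vtogo A B g 0 = g" by (rule ext) (simp only: Vtogo.simps)
    show ?case unfolding e0 by (rule gGs)
  next
    case (Suc k)
    have t: "T - Suc k < T" using Suc.prems by linarith
    have t2: "Suc (T - Suc k) = T - k" using Suc.prems by linarith
    have J: "Jstar A B g T (Suc (T - Suc k)) = Vtogo A B g k"
      unfolding Jstar_def t2 using Suc.prems by (simp add: diff_diff_cancel)
    have am0: "\<forall>z. argmin_set (\<lambda>u. Jstar A B g T (Suc (T - Suc k)) (A z + B u)) \<inter> Esum r B Xs \<noteq> {}"
      by (intro allI, rule argmin_hyp[rule_format, OF t])
    have am: "\<forall>z. argmin_set (\<lambda>u. Vtogo A B g k (A z + B u)) \<inter> Esum r B Xs \<noteq> {}"
      using am0 unfolding J .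
    have "(\<lambda>x. g x + (INF u. Vtogo A B g k (A x + B u))) \<in> Gs r Xs"
      by (rule step[OF addA addB AX closed Suc.IH[OF Suc_leD[OF Suc.prems]] gGs am])
    moreover have e: "Vtogo A B g (Suc k) = (\<lambda>x. g x + (INF u. Vtogo A B g k (A x + B u)))"
      by (rule ext) (simp only: Vtogo.simps)
    ultimately show ?case by (simp only:)
  qed
  have "Vtogo A B g T \<in> Gs r Xs" by (rule IND[OF order_refl])
  then show ?thesis unfolding Jstar_def diff_zero .
qed

end
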